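(* Let $B\subset A$ be Hausdorff compact spaces with $B$ closed in $A$, let $G$ be an abelian group and $n\ge1$, and suppose $\gamma\in H_{n-1}(B;G)$ is nontrivial and $i^{n-1}_{B,A}(\gamma)=0$. Then there exists a closed set $K\subset A$ containing $B$ such that $K$ is an $(n-1)$-homology membrane for $\gamma$ spanned on $B$.
   Context: $H_k(\cdot;G)$ is Čech homology (defined via nerves of finite open covers); $i^k_{B,K}$ is induced by inclusion. For closed $B\subset K$, $K$ is an $(n-1)$-homology membrane spanned on $B$ for $\gamma\in H_{n-1}(B;G)$ if $i^{n-1}_{B,K}(\gamma)=0$ but $i^{n-1}_{B,K'}(\gamma)\ne0$ for every proper closed subset $K'\subsetneq K$ containing $B$. *)

theory Defs
  imports "HOL-Analysis.Analysis"
begin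

text \<open>Cech homology via nerves of finite indexed open covers.
  A finite indexed open cover of a subspace S of X: a finite index set I of naturals
  and sets U i (i in I) open in S, covering S.\<close>

definition ccover :: "'a topology \<Rightarrow> 'a set \<Rightarrow> nat set \<Rightarrow> (nat \<Rightarrow> 'a set) \<Rightarrow> bool" where
  "ccover X S I U \<longleftrightarrow> finite I \<and> (\<forall>i\<in>I. openin (subtopology X S) (U i))
      \<and> S \<subseteq> (\<Union>i\<in>I. U i)"

definition nsimp :: "'a set \<Rightarrow> nat set \<Rightarrow> (nat \<Rightarrow> 'a set) \<Rightarrow> nat list \<Rightarrow> bool" where
  "nsimp S I U \<sigma> \<longleftrightarrow> \<sigma> \<noteq> [] \<and> set \<sigma> \<subseteq> I \<and> (\<exists>x\<in>S. \<forall>i\<in>set \<sigma>. x \<in> U i)"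

definition nchain :: "'a set \<Rightarrow> nat set \<Rightarrow> (nat \<Rightarrow> 'a set) \<Rightarrow> nat \<Rightarrow> (nat list \<Rightarrow> 'g::ab_group_add) \<Rightarrow> bool" where
  "nchain S I U k c \<longleftrightarrow> (\<forall>\<sigma>. c \<sigma> \<noteq> 0 \<longrightarrow> length \<sigma> = Suc k \<and> nsimp S I U \<sigma>)"

definition ldel :: "nat \<Rightarrow> 'b list \<Rightarrow> 'b list" where
  "ldel i \<sigma> = take i \<sigma> @ drop (Suc i) \<sigma>"

definition nbd :: "nat set \<Rightarrow> (nat list \<Rightarrow> 'g::ab_group_add) \<Rightarrow> nat list \<Rightarrow> 'g" where
  "nbd I c \<tau> = (\<Sum>(\<sigma>, i) \<in> {(\<sigma>, i). set \<sigma> \<subseteq> I \<and> length \<sigma> = Suc (length \<tau>) \<and> i < length \<sigma>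
       \<and> ldel i \<sigma> = \<tau>}. (if even i then c \<sigma> else - c \<sigma>))"

text \<open>Cycles (in degree 0 every chain is a cycle: unreduced homology) and boundaries.\<close>
definition ncycle :: "'a set \<Rightarrow> nat set \<Rightarrow> (nat \<Rightarrow> 'a set) \<Rightarrow> nat \<Rightarrow> (nat list \<Rightarrow> 'g::ab_group_add) \<Rightarrow> bool" where
  "ncycle S I U k c \<longleftrightarrow> nchain S I U k c \<and> (k = 0 \<or> nbd I c = (\<lambda>_. 0))"

definition nboundary :: "'a set \<Rightarrow> nat set \<Rightarrow> (nat \<Rightarrow> 'a set) \<Rightarrow> nat \<Rightarrow> (nat list \<Rightarrow> 'g::ab_group_add) \<Rightarrow> bool" where
  "nboundary S I U k c \<longleftrightarrow> (\<exists>d. nchain S I U (Suc k) d \<and> c = nbd I d)"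

definition npush :: "nat set \<Rightarrow> (nat \<Rightarrow> nat) \<Rightarrow> (nat list \<Rightarrow> 'g::ab_group_add) \<Rightarrow> nat list \<Rightarrow> 'g" where
  "npush J f c \<tau> = (\<Sum>\<sigma> \<in> {\<sigma>. set \<sigma> \<subseteq> J \<and> length \<sigma> = length \<tau> \<and> map f \<sigma> = \<tau>}. c \<sigma>)"

text \<open>An element of the Cech homology group H_k(S;G): a choice of a k-cycle in the nerve
  of every finite open cover of S, compatible (up to boundaries) with all projections
  of refinements.  Two such families represent the same element iff they differ by
  boundaries on every cover; in particular the element is zero iff all its components
  are boundaries.\<close>
definition cech_class :: "'a topology \<Rightarrow> 'a set \<Rightarrow> nat \<Rightarrow>
    (nat set \<Rightarrow> (nat \<Rightarrow> 'a set) \<Rightarrow> nat list \<Rightarrow> 'g::ab_group_add) \<Rightarrow> bool" where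
  "cech_class X S k z \<longleftrightarrow>
     (\<forall>I U. ccover X S I U \<longrightarrow> ncycle S I U k (z I U)) \<and>
     (\<forall>I U J V f. ccover X S I U \<longrightarrow> ccover X S J V \<longrightarrow> (\<forall>j\<in>J. f j \<in> I \<and> V j \<subseteq> U (f j)) \<longrightarrow>
        nboundary S I U k (\<lambda>\<tau>. npush J f (z J V) \<tau> - z I U \<tau>))"

definition cech_zero :: "'a topology \<Rightarrow> 'a set \<Rightarrow> nat \<Rightarrow>
    (nat set \<Rightarrow> (nat \<Rightarrow> 'a set) \<Rightarrow> nat list \<Rightarrow> 'g::ab_group_add) \<Rightarrow> bool" where
  "cech_zero X S k z \<longleftrightarrow> (\<forall>I U. ccover X S I U \<longrightarrow> nboundary S I U k (z I U))"

text \<open>The image of z on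
  a cover W of K is the component of z on the restricted cover (W i inter B), viewed
  in the nerve of W via the identity on indices.\<close>
definition incl_zero :: "'a topology \<Rightarrow> 'a set \<Rightarrow> 'a set \<Rightarrow> nat \<Rightarrow>
    (nat set \<Rightarrow> (nat \<Rightarrow> 'a set) \<Rightarrow> nat list \<Rightarrow> 'g::ab_group_add) \<Rightarrow> bool" where
  "incl_zero X B K k z \<longleftrightarrow>
     (\<forall>I W. ccover X K I W \<longrightarrow> nboundary K I W k (z I (\<lambda>i. W i \<inter> B)))"

definition homology_membrane :: "'a topology \<Rightarrow> 'a set \<Rightarrow> 'a set \<Rightarrow> nat \<Rightarrow>
    (nat set \<Rightarrow> (nat \<Rightarrow> 'a set) \<Rightarrow> nat list \<Rightarrow> 'g::ab_group_add) \<Rightarrow> bool" where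
  "homology_membrane X B K k z \<longleftrightarrow>
     closedin X K \<and> B \<subseteq> K \<and> incl_zero X B K k z \<and>
     (\<forall>K'. closedin X K' \<and> B \<subseteq> K' \<and> K' \<subset> K \<longrightarrow> \<not> incl_zero X B K' k z)"

end

theory Submission
  imports Defs
begin

lemma nbd_diff: "nbd I (\<lambda>\<sigma>. d \<sigma> - e \<sigma>) = (\<lambda>\<tau>. nbd I d \<tau> - nbd I e \<tau>)"
  unfolding nbd_def
  by (rule ext, subst sum_subtractf[symmetric], rule sum.cong, auto)

lemma npush_id:
  assumes "nchain S I U k c" shows "npush I (\<lambda>j. j) c = c"
proof
  fix \<tau>
  have "{\<sigma>. set \<sigma> \<subseteq> I \<and> length \<sigma> = length \<tau> \<and> map (\<lambda>j. j) \<sigma> = \<tau>} = (if set \<tau> \<subseteq> I then {\<tau>} else {})"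
    by auto
  moreover have "\<not> set \<tau> \<subseteq> I \<Longrightarrow> c \<tau> = 0"
    using assms unfolding nchain_def nsimp_def by blast
  ultimately show "npush I (\<lambda>j. j) c \<tau> = c \<tau>"
    unfolding npush_def by auto
qed

lemma finite_chain_min:
  assumes "finite G" "G \<noteq> {}" "\<forall>A\<in>G. \<forall>B\<in>G. A \<subseteq> B \<or> B \<subseteq> A"
  shows "\<exists>K\<in>G. \<forall>A\<in>G. K \<subseteq> A"
  using assms
proof (induction G rule: finite_ne_induct)
  case (singleton x) then show ?case by auto
next
  case (insert x F)
  then obtain K where K: "K \<in> F" "\<forall>A\<in>F. K \<subseteq> A" by auto
  show ?case
  proof (cases "x \<subseteq> K")
    case True then show ?thesis using K by blast
  next
    case False
    then have "K \<subseteq> x" using insert.prems K by blast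
    then show ?thesis using K by blast
  qed
qed

lemma chain_compact:
  assumes "compact_space X" "\<K> \<noteq> {}" "\<forall>K\<in>\<K>. closedin X K"
    "\<forall>A\<in>\<K>. \<forall>B\<in>\<K>. A \<subseteq> B \<or> B \<subseteq> A" "closedin X C" "\<Inter>\<K> \<inter> C = {}"
  shows "\<exists>K\<in>\<K>. K \<inter> C = {}"
proof -
  have cC: "compactin X C" by (rule closedin_compact_space[OF assms(1,5)])
  have op: "\<forall>U\<in>(\<lambda>K. topspace X - K) ` \<K>. openin X U" using assms(3) by blast
  have cv: "C \<subseteq> \<Union>((\<lambda>K. topspace X - K) ` \<K>)"
  proof
    fix x assume x: "x \<in> C"
    then have "x \<in> topspace X" using closedin_subset[OF assms(5)] by blast
    moreover obtain K where "K \<in> \<K>" "x \<notin> K" using x assms(6) by blast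
    ultimately show "x \<in> \<Union>((\<lambda>K. topspace X - K) ` \<K>)" by blast
  qed
  have "\<exists>F. finite F \<and> F \<subseteq> (\<lambda>K. topspace X - K) ` \<K> \<and> C \<subseteq> \<Union>F"
    by (rule conjunct2[OF cC[unfolded compactin_def], rule_format], rule conjI[OF op cv])
  then obtain F where F: "finite F" "F \<subseteq> (\<lambda>K. topspace X - K) ` \<K>" "C \<subseteq> \<Union>F"
    by blast
  obtain G where G: "G \<subseteq> \<K>" "finite G" "F = (\<lambda>K. topspace X - K) ` G"
    using finite_subset_image[OF F(1,2)] by blast
  show ?thesis
  proof (cases "G = {}")
    case True
    then have "C = {}" using F G by simp
    then show ?thesis using assms(2) by blast
  next
    case False
    have chG: "\<forall>A\<in>G. \<forall>B\<in>G. A \<subseteq> B \<or> B \<subseteq> A" using assms(4) G(1) by (simp add: subset_iff)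
    obtain K where K: "K \<in> G" "\<forall>A\<in>G. K \<subseteq> A"
      using finite_chain_min[OF G(2) False chG] by blast
    have "K \<inter> C = {}"
    proof (rule ccontr)
      assume "K \<inter> C \<noteq> {}"
      then obtain x where x: "x \<in> K" "x \<in> C" by blast
      then obtain A where "A \<in> G" "x \<notin> A" using F(3) G(3) by blast
      then show False using K x by blast
    qed
    then show ?thesis using K G by blast
  qed
qed

lemma chain_incl_zero:
  assumes haus: "Hausdorff_space X" and cpt: "compact_space X" and cB: "closedin X B"
    and ne: "\<K> \<noteq> {}" and KK: "\<forall>K\<in>\<K>. closedin X K \<and> B \<subseteq> K \<and> incl_zero X B K k z"
    and ch: "\<forall>A\<in>\<K>. \<forall>B\<in>\<K>. A \<subseteq> B \<or> B \<subseteq> A"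
    and cc: "cech_class X B k z"
  shows "incl_zero X B (\<Inter>\<K>) k z"
  unfolding incl_zero_def
proof (intro allI impI)
  fix I W assume cov: "ccover X (\<Inter>\<K>) I W"
  define Ki where "Ki = \<Inter>\<K>"
  have cKi: "closedin X Ki" unfolding Ki_def using ne KK by blast
  have BKi: "B \<subseteq> Ki" unfolding Ki_def using KK by blast
  have finI: "finite I" and opW: "\<forall>i\<in>I. openin (subtopology X Ki) (W i)"
    and covW: "Ki \<subseteq> (\<Union>i\<in>I. W i)" using cov unfolding ccover_def Ki_def by auto
  have "\<forall>i\<in>I. \<exists>T. openin X T \<and> W i = T \<inter> Ki" using opW openin_subtopology by blast
  then have "\<exists>Op. \<forall>i\<in>I. openin X (Op i) \<and> W i = Op i \<inter> Ki" by (rule bchoice)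
  then obtain Op where Op: "\<forall>i\<in>I. openin X (Op i) \<and> W i = Op i \<inter> Ki" by blast
  have reg: "regular_space X" using compact_Hausdorff_imp_regular_space cpt haus by blast
  have "\<forall>x\<in>Ki. \<exists>i N D. i \<in> I \<and> openin X N \<and> closedin X D \<and> x \<in> N \<and> N \<subseteq> D \<and> D \<subseteq> Op i"
  proof
    fix x assume x: "x \<in> Ki"
    then obtain i where i: "i \<in> I" "x \<in> W i" using covW by blast
    then have xO: "x \<in> Op i" "openin X (Op i)" using Op by auto
    then have "closedin X (topspace X - Op i)" "x \<in> topspace X - (topspace X - Op i)"
      using openin_subset by auto
    then obtain U V where UV: "openin X U" "openin X V" "x \<in> U" "topspace X - Op i \<subseteq> V" "disjnt U V"
      using reg unfolding regular_space_def by meson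
    show "\<exists>i N D. i \<in> I \<and> openin X N \<and> closedin X D \<and> x \<in> N \<and> N \<subseteq> D \<and> D \<subseteq> Op i"
      apply (rule exI[of _ i], rule exI[of _ U], rule exI[of _ "topspace X - V"])
      using UV i openin_subset[OF UV(1)] by (auto simp: disjnt_def)
  qed
  then have "\<exists>ix. \<forall>x\<in>Ki. \<exists>N D. ix x \<in> I \<and> openin X N \<and> closedin X D \<and> x \<in> N \<and> N \<subseteq> D \<and> D \<subseteq> Op (ix x)"
    by (rule bchoice)
  then obtain ix where "\<forall>x\<in>Ki. \<exists>N D. ix x \<in> I \<and> openin X N \<and> closedin X D \<and> x \<in> N \<and> N \<subseteq> D \<and> D \<subseteq> Op (ix x)"
    by blast
  then have "\<exists>N. \<forall>x\<in>Ki. \<exists>D. ix x \<in> I \<and> openin X (N x) \<and> closedin X D \<and> x \<in> N x \<and> N x \<subseteq> D \<and> D \<subseteq> Op (ix x)"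
    by (rule bchoice)
  then obtain N where "\<forall>x\<in>Ki. \<exists>D. ix x \<in> I \<and> openin X (N x) \<and> closedin X D \<and> x \<in> N x \<and> N x \<subseteq> D \<and> D \<subseteq> Op (ix x)"
    by blast
  then have "\<exists>D. \<forall>x\<in>Ki. ix x \<in> I \<and> openin X (N x) \<and> closedin X (D x) \<and> x \<in> N x \<and> N x \<subseteq> D x \<and> D x \<subseteq> Op (ix x)"
    by (rule bchoice)
  then obtain D where ND: "\<forall>x\<in>Ki. ix x \<in> I \<and> openin X (N x) \<and> closedin X (D x) \<and> x \<in> N x
      \<and> N x \<subseteq> D x \<and> D x \<subseteq> Op (ix x)" by blast
  have ixI: "\<And>x. x \<in> Ki \<Longrightarrow> ix x \<in> I" and oN: "\<And>x. x \<in> Ki \<Longrightarrow> openin X (N x)"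
    and cD: "\<And>x. x \<in> Ki \<Longrightarrow> closedin X (D x)" and xN: "\<And>x. x \<in> Ki \<Longrightarrow> x \<in> N x"
    and ND': "\<And>x. x \<in> Ki \<Longrightarrow> N x \<subseteq> D x" and DO: "\<And>x. x \<in> Ki \<Longrightarrow> D x \<subseteq> Op (ix x)"
    using ND by auto
  have cKi': "compactin X Ki" by (rule closedin_compact_space[OF cpt cKi])
  have op1: "\<forall>U\<in>N ` Ki. openin X U" using oN by blast
  have cv1: "Ki \<subseteq> \<Union>(N ` Ki)" using xN by blast
  have "\<exists>F. finite F \<and> F \<subseteq> N ` Ki \<and> Ki \<subseteq> \<Union>F"
    by (rule conjunct2[OF cKi'[unfolded compactin_def], rule_format], rule conjI[OF op1 cv1])
  then obtain F where F: "finite F" "F \<subseteq> N ` Ki" "Ki \<subseteq> \<Union>F" by blast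
  obtain T where T: "T \<subseteq> Ki" "finite T" "F = N ` T" using finite_subset_image[OF F(1,2)] by blast
  define Oq where "Oq i = \<Union>(N ` {x\<in>T. ix x = i})" for i
  define C where "C i = \<Union>(D ` {x\<in>T. ix x = i})" for i
  have oOq: "openin X (Oq i)" for i unfolding Oq_def
    by (rule openin_Union) (use oN T in blast)
  have cC: "closedin X (C i)" for i unfolding C_def
    by (rule closedin_Union) (use cD T in auto)
  have OqC: "Oq i \<subseteq> C i" for i unfolding Oq_def C_def using ND' T by blast
  have CO: "C i \<subseteq> Op i" for i unfolding C_def using DO T by blast
  have KiOq: "Ki \<subseteq> (\<Union>i\<in>I. Oq i)"
  proof
    fix x assume "x \<in> Ki"
    then obtain y where y: "y \<in> T" "x \<in> N y" using F T by blast
    then have "ix y \<in> I" using ixI T by blast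
    moreover have "x \<in> Oq (ix y)" unfolding Oq_def using y by blast
    ultimately show "x \<in> (\<Union>i\<in>I. Oq i)" by blast
  qed
  define Sb where "Sb = {S. S \<subseteq> I \<and> \<not> (\<exists>x\<in>Ki. \<forall>i\<in>S. x \<in> W i)}"
  define Cbig where "Cbig = (topspace X - (\<Union>i\<in>I. Oq i)) \<union> (\<Union>S\<in>Sb. topspace X \<inter> \<Inter>(C ` S))"
  have finSb: "finite Sb" unfolding Sb_def using finI by simp
  have cS: "closedin X (topspace X \<inter> \<Inter>(C ` S))" for S
  proof (cases "S = {}")
    case True then show ?thesis by simp
  next
    case False
    then have "closedin X (\<Inter>(C ` S))" using cC by blast
    then show ?thesis using closedin_subset by (metis inf.absorb_iff2)
  qed
  have cCbig: "closedin X Cbig" unfolding Cbig_def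
    using finSb cS oOq by (intro closedin_Un closedin_Union) auto
  have disj: "\<Inter>\<K> \<inter> Cbig = {}"
  proof -
    { fix x assume x: "x \<in> Ki" "x \<in> Cbig"
      then have xO: "x \<in> (\<Union>i\<in>I. Oq i)" using KiOq by blast
      have "x \<in> topspace X - (\<Union>i\<in>I. Oq i) \<or> (\<exists>S\<in>Sb. x \<in> topspace X \<inter> \<Inter>(C ` S))"
        using x(2) unfolding Cbig_def by blast
      then obtain S where S: "S \<in> Sb" "x \<in> topspace X \<inter> \<Inter>(C ` S)" using xO by blast
      have SI: "S \<subseteq> I" and nS: "\<not> (\<exists>y\<in>Ki. \<forall>i\<in>S. y \<in> W i)" using S(1) unfolding Sb_def by auto
      have "\<forall>i\<in>S. x \<in> W i"
      proof
        fix i assume i: "i \<in> S"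
        then have "x \<in> Op i" using S(2) CO by blast
        moreover have "W i = Op i \<inter> Ki" using Op SI i by blast
        ultimately show "x \<in> W i" using x(1) by blast
      qed
      then have False using nS x(1) by blast }
    then show ?thesis unfolding Ki_def by blast
  qed
  have clK: "\<forall>K\<in>\<K>. closedin X K" using KK by blast
  obtain Ka where Ka: "Ka \<in> \<K>" "Ka \<inter> Cbig = {}"
    using chain_compact[OF cpt ne clK ch cCbig disj] by blast
  have KaKi: "Ki \<subseteq> Ka" unfolding Ki_def using Ka(1) by (rule Inter_lower)
  have cKa: "closedin X Ka" and BKa: "B \<subseteq> Ka" and izKa: "incl_zero X B Ka k z"
    using KK Ka(1) by auto
  define W2 where "W2 i = Oq i \<inter> Ka" for i
  have Ka_cov: "Ka \<subseteq> (\<Union>i\<in>I. Oq i)"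
  proof
    fix x assume x: "x \<in> Ka"
    then have "x \<in> topspace X" using closedin_subset[OF cKa] by blast
    moreover have "x \<notin> Cbig" using x Ka(2) by blast
    ultimately show "x \<in> (\<Union>i\<in>I. Oq i)" unfolding Cbig_def by blast
  qed
  have cov2: "ccover X Ka I W2" unfolding ccover_def W2_def
  proof (intro conjI finI ballI)
    fix i show "openin (subtopology X Ka) (Oq i \<inter> Ka)" using oOq by (rule openin_subtopology_Int)
  next
    show "Ka \<subseteq> (\<Union>i\<in>I. Oq i \<inter> Ka)" using Ka_cov by blast
  qed
  obtain d where d: "nchain Ka I W2 (Suc k) d" "z I (\<lambda>i. W2 i \<inter> B) = nbd I d"
    using izKa[unfolded incl_zero_def, rule_format, OF cov2] unfolding nboundary_def by blast
  define U where "U i = W i \<inter> B" for i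
  define V where "V i = W2 i \<inter> B" for i
  have covU: "ccover X B I U" unfolding ccover_def U_def
  proof (intro conjI finI ballI)
    fix i assume "i \<in> I"
    then have "W i \<inter> B = Op i \<inter> B" using Op BKi by auto
    then show "openin (subtopology X B) (W i \<inter> B)" using Op \<open>i \<in> I\<close> openin_subtopology_Int by metis
  next
    show "B \<subseteq> (\<Union>i\<in>I. W i \<inter> B)" using covW BKi by blast
  qed
  have covV: "ccover X B I V" unfolding ccover_def V_def W2_def
  proof (intro conjI finI ballI)
    fix i assume "i \<in> I"
    have "Oq i \<inter> Ka \<inter> B = Oq i \<inter> B" using BKa by auto
    then show "openin (subtopology X B) (Oq i \<inter> Ka \<inter> B)" using oOq openin_subtopology_Int by metis
  next
    show "B \<subseteq> (\<Union>i\<in>I. Oq i \<inter> Ka \<inter> B)" using cov2 BKa unfolding ccover_def W2_def by blast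
  qed
  have ref: "\<forall>j\<in>I. (\<lambda>j. j) j \<in> I \<and> V j \<subseteq> U ((\<lambda>j. j) j)"
    unfolding V_def U_def W2_def using OqC CO Op KaKi BKi by fastforce
  obtain e where e: "nchain B I U (Suc k) e" "(\<lambda>\<tau>. npush I (\<lambda>j. j) (z I V) \<tau> - z I U \<tau>) = nbd I e"
    using conjunct2[OF cc[unfolded cech_class_def], rule_format, OF covU covV ref[rule_format]] unfolding nboundary_def by blast
  have "nchain B I V k (z I V)" using conjunct1[OF cc[unfolded cech_class_def], rule_format, OF covV] unfolding ncycle_def by blast
  then have "npush I (\<lambda>j. j) (z I V) = z I V" by (rule npush_id)
  have zU: "z I U = nbd I (\<lambda>\<sigma>. d \<sigma> - e \<sigma>)"
  proof
    fix \<tau>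
    have "z I V \<tau> - z I U \<tau> = nbd I e \<tau>" using fun_cong[OF e(2), of \<tau>] \<open>npush I (\<lambda>j. j) (z I V) = z I V\<close> by simp
    moreover have "z I V \<tau> = nbd I d \<tau>" using d(2) unfolding V_def by simp
    ultimately show "z I U \<tau> = nbd I (\<lambda>\<sigma>. d \<sigma> - e \<sigma>) \<tau>" unfolding nbd_diff by (simp add: algebra_simps)
  qed
  have "nchain Ki I W (Suc k) (\<lambda>\<sigma>. d \<sigma> - e \<sigma>)" unfolding nchain_def
  proof (intro allI impI)
    fix \<sigma> assume "d \<sigma> - e \<sigma> \<noteq> 0"
    then consider "d \<sigma> \<noteq> 0" | "e \<sigma> \<noteq> 0" by fastforce
    then show "length \<sigma> = Suc (Suc k) \<and> nsimp Ki I W \<sigma>"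
    proof cases
      case 1
      then have L: "length \<sigma> = Suc (Suc k)" and ns: "nsimp Ka I W2 \<sigma>" using d(1) unfolding nchain_def by auto
      then obtain x where x: "x \<in> Ka" "\<forall>i\<in>set \<sigma>. x \<in> Oq i" "\<sigma> \<noteq> []" "set \<sigma> \<subseteq> I"
        unfolding nsimp_def W2_def by blast
      have "\<exists>y\<in>Ki. \<forall>i\<in>set \<sigma>. y \<in> W i"
      proof (rule ccontr)
        assume "\<not> ?thesis"
        then have "set \<sigma> \<in> Sb" using x unfolding Sb_def by blast
        moreover have "x \<in> topspace X \<inter> \<Inter>(C ` set \<sigma>)"
          using x OqC closedin_subset[OF cKa] by blast
        ultimately have "x \<in> Cbig" unfolding Cbig_def by blast
        then show False using Ka x by blast
      qed
      then show ?thesis using L x unfolding nsimp_def by blast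
    next
      case 2
      then have L: "length \<sigma> = Suc (Suc k)" and ns: "nsimp B I U \<sigma>" using e(1) unfolding nchain_def by auto
      then show ?thesis using BKi unfolding nsimp_def U_def by blast
    qed
  qed
  then show "nboundary (\<Inter>\<K>) I W k (z I (\<lambda>i. W i \<inter> B))"
    unfolding nboundary_def Ki_def[symmetric] U_def[symmetric] using zU by blast
qed

theorem lemma2p6:
  fixes X :: "'a topology" and B :: "'a set" and n :: nat
    and \<gamma> :: "nat set \<Rightarrow> (nat \<Rightarrow> 'a set) \<Rightarrow> nat list \<Rightarrow> 'g::ab_group_add"
  assumes "Hausdorff_space X" and "compact_space X"
    and "closedin X B" and "n \<ge> 1"
    and "cech_class X B (n - 1) \<gamma>"
    and "\<not> cech_zero X B (n - 1) \<gamma>"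
    and "incl_zero X B (topspace X) (n - 1) \<gamma>"
  shows "\<exists>K. closedin X K \<and> B \<subseteq> K \<and> homology_membrane X B K (n - 1) \<gamma>"
proof -
  define F where "F = {K. closedin X K \<and> B \<subseteq> K \<and> incl_zero X B K (n - 1) \<gamma>}"
  define A where "A = (\<lambda>K. topspace X - K) ` F"
  have topF: "topspace X \<in> F" unfolding F_def using assms(3,7) closedin_subset by auto
  have "\<exists>M\<in>A. \<forall>Y\<in>A. M \<subseteq> Y \<longrightarrow> Y = M"
  proof (rule subset_Zorn')
    fix C assume "subset.chain A C"
    then have CA: "C \<subseteq> A" and chC: "\<forall>P\<in>C. \<forall>Q\<in>C. P \<subseteq> Q \<or> Q \<subseteq> P"
      unfolding subset_chain_def by auto
    show "\<Union>C \<in> A"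
    proof (cases "C = {}")
      case True then show ?thesis unfolding A_def using topF by auto
    next
      case False
      define KK where "KK = {K\<in>F. topspace X - K \<in> C}"
      have FT: "K \<subseteq> topspace X" if "K \<in> F" for K using that closedin_subset unfolding F_def by auto
      have CKK: "C = (\<lambda>K. topspace X - K) ` KK" using CA unfolding KK_def A_def by auto
      have KKne: "KK \<noteq> {}" using CKK False by auto
      have chKK: "\<forall>P\<in>KK. \<forall>Q\<in>KK. P \<subseteq> Q \<or> Q \<subseteq> P"
      proof (intro ballI)
        fix P Q assume PQ: "P \<in> KK" "Q \<in> KK"
        then have "topspace X - P \<subseteq> topspace X - Q \<or> topspace X - Q \<subseteq> topspace X - P"
          using chC unfolding KK_def by auto
        moreover have "P \<subseteq> topspace X" "Q \<subseteq> topspace X" using PQ FT unfolding KK_def by auto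
        ultimately show "P \<subseteq> Q \<or> Q \<subseteq> P" by blast
      qed
      have "incl_zero X B (\<Inter>KK) (n - 1) \<gamma>"
        using chain_incl_zero[OF assms(1,2,3) KKne _ chKK assms(5)] unfolding KK_def F_def by blast
      moreover have "closedin X (\<Inter>KK)" using KKne unfolding KK_def F_def by blast
      moreover have "B \<subseteq> \<Inter>KK" unfolding KK_def F_def by blast
      ultimately have "\<Inter>KK \<in> F" unfolding F_def by blast
      moreover have "\<Union>C = topspace X - \<Inter>KK" unfolding CKK by blast
      ultimately show ?thesis unfolding A_def by blast
    qed
  qed
  then obtain K where K: "K \<in> F" and max: "\<forall>Y\<in>A. topspace X - K \<subseteq> Y \<longrightarrow> Y = topspace X - K"
    unfolding A_def by blast
  have "homology_membrane X B K (n - 1) \<gamma>"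
    unfolding homology_membrane_def
  proof (intro conjI allI impI)
    show "closedin X K" "B \<subseteq> K" "incl_zero X B K (n - 1) \<gamma>" using K unfolding F_def by auto
  next
    fix K' assume K': "closedin X K' \<and> B \<subseteq> K' \<and> K' \<subset> K"
    show "\<not> incl_zero X B K' (n - 1) \<gamma>"
    proof
      assume "incl_zero X B K' (n - 1) \<gamma>"
      then have "topspace X - K' \<in> A" unfolding A_def F_def using K' by blast
      moreover have "topspace X - K \<subseteq> topspace X - K'" using K' by blast
      ultimately have "topspace X - K' = topspace X - K" using max by blast
      moreover have "K \<subseteq> topspace X" using K closedin_subset unfolding F_def by auto
      ultimately show False using K' by blast
    qed
  qed
  then show ?thesis using K unfolding F_def by blast
qed

end
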